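(* Let $U\in\mathbb{U}_N$ and $\delta\ge0$. If at least a $2/3$ fraction of the vectors $\vec{x}\in\mathbb{Z}_4^n$ satisfy $D(U\sigma_{\vec{x}}U^\dagger,\mathcal{P}_n)\le\delta$, then $D(U\sigma_{\vec{y}}U^\dagger,\mathcal{P}_n)\le 2\delta$ for every $\vec{y}\in\mathbb{Z}_4^n$.
   Context: $n\ge1$, $N=2^n$, $\mathbb{U}_N$ the $N\times N$ unitaries. Pauli matrices $\sigma_0=I,\sigma_1=X,\sigma_2=Y,\sigma_3=Z$; for $\vec{x}\in\mathbb{Z}_4^n=\{0,1,2,3\}^n$, $\sigma_{\vec{x}}=\sigma_{x_1}\otimes\cdots\otimes\sigma_{x_n}$. Pauli group $\mathcal{P}_n=\{i^k\sigma_{\vec{x}}: k\in\{0,1,2,3\},\vec{x}\in\mathbb{Z}_4^n\}$. $\|A\|=\sqrt{\mathrm{tr}(A^\dagger A)}$; $D(A,B)=\min_{\theta\in[0,2\pi)}\frac{1}{\sqrt{2N}}\|e^{i\theta}A-B\|$; $D(A,\mathcal{S})=\inf_{B\in\mathcal{S}}D(A,B)$. *)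

theory Defs
  imports Complex_Main "Jordan_Normal_Form.Matrix"
begin

definition adj :: "complex mat \<Rightarrow> complex mat" where
  "adj A = mat (dim_col A) (dim_row A) (\<lambda>(i,j). cnj (A $$ (j,i)))"

definition mtrace :: "complex mat \<Rightarrow> complex" where
  "mtrace A = (\<Sum>i<dim_row A. A $$ (i,i))"

definition unitary :: "nat \<Rightarrow> complex mat \<Rightarrow> bool" where
  "unitary N U \<longleftrightarrow> U \<in> carrier_mat N N \<and> adj U * U = 1\<^sub>m N \<and> U * adj U = 1\<^sub>m N"

definition kron :: "complex mat \<Rightarrow> complex mat \<Rightarrow> complex mat" where
  "kron A B = mat (dim_row A * dim_row B) (dim_col A * dim_col B)
     (\<lambda>(i,j). A $$ (i div dim_row B, j div dim_col B) * B $$ (i mod dim_row B, j mod dim_col B))"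

(* single-qubit Pauli matrices sigma_0 = I, sigma_1 = X, sigma_2 = Y, sigma_3 = Z *)
definition pauli1 :: "nat \<Rightarrow> complex mat" where
  "pauli1 k = (if k = 0 then mat_of_rows_list 2 [[1, 0], [0, 1]]
     else if k = 1 then mat_of_rows_list 2 [[0, 1], [1, 0]]
     else if k = 2 then mat_of_rows_list 2 [[0, -\<i>], [\<i>, 0]]
     else mat_of_rows_list 2 [[1, 0], [0, -1]])"

(* Z_4^n as lists of length n with entries in {0,1,2,3} *)
definition pauli_idx :: "nat \<Rightarrow> nat list set" where
  "pauli_idx n = {xs. length xs = n \<and> set xs \<subseteq> {0..<4}}"

definition pauli_str :: "nat list \<Rightarrow> complex mat" where
  "pauli_str xs = foldr (\<lambda>k M. kron (pauli1 k) M) xs (1\<^sub>m 1)"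

definition pauli_group :: "nat \<Rightarrow> complex mat set" where
  "pauli_group n = {(\<i> ^ k) \<cdot>\<^sub>m pauli_str xs | k xs. k \<in> {0..<4} \<and> xs \<in> pauli_idx n}"

definition fnorm :: "complex mat \<Rightarrow> real" where
  "fnorm A = sqrt (Re (mtrace (adj A * A)))"

definition phase_dist :: "complex mat \<Rightarrow> complex mat \<Rightarrow> real" where
  "phase_dist A B = (INF \<theta>\<in>{0..<2*pi}. fnorm (exp (\<i> * complex_of_real \<theta>) \<cdot>\<^sub>m A - B)
                                       / sqrt (2 * real (dim_row A)))"

definition set_dist :: "complex mat \<Rightarrow> complex mat set \<Rightarrow> real" where
  "set_dist A S = (INF B\<in>S. phase_dist A B)"

end

theory Submission
  imports Defs "HOL-Analysis.L2_Norm"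
begin

lemma adj_dim[simp]: "dim_row (adj A) = dim_col A" "dim_col (adj A) = dim_row A"
  by (auto simp: adj_def)

lemma adj_index[simp]: "i < dim_col A \<Longrightarrow> j < dim_row A \<Longrightarrow> adj A $$ (i,j) = cnj (A $$ (j,i))"
  by (auto simp: adj_def)

lemma adj_carrier[simp]: "A \<in> carrier_mat r c \<Longrightarrow> adj A \<in> carrier_mat c r"
  unfolding carrier_mat_def by simp

lemma mult_index: "A \<in> carrier_mat a b \<Longrightarrow> B \<in> carrier_mat b c \<Longrightarrow> i < a \<Longrightarrow> j < c \<Longrightarrow>
   (A * B) $$ (i,j) = (\<Sum>k<b. A $$ (i,k) * B $$ (k,j))"
  by (auto simp: scalar_prod_def lessThan_atLeast0 intro!: sum.cong)

lemma rowcol: "A \<in> carrier_mat a b \<Longrightarrow> B \<in> carrier_mat b c \<Longrightarrow> i < a \<Longrightarrow> j < c \<Longrightarrow>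
   row A i \<bullet> col B j = (\<Sum>k<b. A $$ (i,k) * B $$ (k,j))"
  by (auto simp: scalar_prod_def lessThan_atLeast0 intro!: sum.cong)

lemma adj_mult: assumes "A \<in> carrier_mat a b" "B \<in> carrier_mat b c"
  shows "adj (A * B) = adj B * adj A"
proof (rule eq_matI)
  fix i j assume ij: "i < dim_row (adj B * adj A)" "j < dim_col (adj B * adj A)"
  hence i: "i < c" and j: "j < a" using assms by auto
  have "adj (A * B) $$ (i,j) = cnj ((A*B) $$ (j,i))" using assms i j by simp
  also have "\<dots> = (\<Sum>k<b. cnj (A $$ (j,k)) * cnj (B $$ (k,i)))"
    using mult_index[OF assms j i] by simp
  also have "\<dots> = (adj B * adj A) $$ (i,j)"
    using assms i j by (subst mult_index[of _ c b _ a]) (auto simp: mult.commute)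
  finally show "adj (A * B) $$ (i,j) = (adj B * adj A) $$ (i,j)" .
qed (use assms in auto)

lemma adj_smult: "adj (c \<cdot>\<^sub>m A) = cnj c \<cdot>\<^sub>m adj A"
  by (rule eq_matI) auto

lemma adj_one[simp]: "adj (1\<^sub>m n) = 1\<^sub>m n"
  by (rule eq_matI) auto

lemma mtrace_comm: assumes "A \<in> carrier_mat a b" "B \<in> carrier_mat b a"
  shows "mtrace (A * B) = mtrace (B * A)"
proof -
  have "mtrace (A * B) = (\<Sum>i<a. \<Sum>k<b. A $$ (i,k) * B $$ (k,i))"
    unfolding mtrace_def using assms by (auto intro!: sum.cong simp: rowcol[OF assms])
  also have "\<dots> = (\<Sum>k<b. \<Sum>i<a. B $$ (k,i) * A $$ (i,k))"
    by (subst sum.swap) (simp add: mult.commute)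
  also have "\<dots> = mtrace (B * A)"
    unfolding mtrace_def using assms by (auto intro!: sum.cong simp: rowcol[OF assms(2,1)])
  finally show ?thesis .
qed

lemma fnorm_eq: assumes "A \<in> carrier_mat r c"
  shows "fnorm A = L2_set (\<lambda>(k,j). cmod (A $$ (k,j))) ({..<r} \<times> {..<c})"
proof -
  have "mtrace (adj A * A) = (\<Sum>j<c. \<Sum>k<r. adj A $$ (j,k) * A $$ (k,j))"
    unfolding mtrace_def using assms by (auto intro!: sum.cong simp: rowcol[OF adj_carrier[OF assms] assms])
  also have "\<dots> = (\<Sum>j<c. \<Sum>k<r. complex_of_real ((cmod (A $$ (k,j)))^2))"
    proof (intro sum.cong refl)
    fix j k assume "j \<in> {..<c}" "k \<in> {..<r}"
    hence "adj A $$ (j,k) = cnj (A $$ (k,j))" using assms by simp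
    thus "adj A $$ (j,k) * A $$ (k,j) = complex_of_real ((cmod (A $$ (k,j)))^2)"
      by (simp only: complex_norm_square mult.commute)
  qed
  finally have "Re (mtrace (adj A * A)) = (\<Sum>j<c. \<Sum>k<r. (cmod (A $$ (k,j)))^2)"
    by simp
  also have "\<dots> = (\<Sum>k<r. \<Sum>j<c. (cmod (A $$ (k,j)))^2)" by (rule sum.swap)
  also have "\<dots> = (\<Sum>x\<in>{..<r} \<times> {..<c}. ((\<lambda>(k,j). cmod (A $$ (k,j))) x)^2)"
    by (simp add: sum.cartesian_product)
  finally show ?thesis unfolding fnorm_def L2_set_def by simp
qed


lemma carrier_self: "A \<in> carrier_mat (dim_row A) (dim_col A)"
  unfolding carrier_mat_def by simp

lemma fnorm_nonneg: "fnorm A \<ge> 0"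
  using fnorm_eq[OF carrier_self] by (simp add: L2_set_nonneg)

lemma fnorm_smult: "fnorm (c \<cdot>\<^sub>m A) = cmod c * fnorm A"
proof -
  have "fnorm (c \<cdot>\<^sub>m A) = L2_set (\<lambda>(k,j). cmod ((c \<cdot>\<^sub>m A) $$ (k,j))) ({..<dim_row A} \<times> {..<dim_col A})"
    using fnorm_eq[of "c \<cdot>\<^sub>m A" "dim_row A" "dim_col A"] unfolding carrier_mat_def by simp
  also have "\<dots> = L2_set (\<lambda>x. cmod c * (\<lambda>(k,j). cmod (A $$ (k,j))) x) ({..<dim_row A} \<times> {..<dim_col A})"
    by (rule L2_set_cong) (auto simp: norm_mult)
  also have "\<dots> = cmod c * fnorm A"
    by (subst L2_set_right_distrib[symmetric]) (auto simp: fnorm_eq[OF carrier_self])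
  finally show ?thesis .
qed

lemma fnorm_triangle: assumes "A \<in> carrier_mat r c" "B \<in> carrier_mat r c"
  shows "fnorm (A + B) \<le> fnorm A + fnorm B"
proof -
  have AB: "A + B \<in> carrier_mat r c" using assms by simp
  have "fnorm (A + B) = L2_set (\<lambda>(k,j). cmod ((A + B) $$ (k,j))) ({..<r} \<times> {..<c})"
    by (rule fnorm_eq[OF AB])
  also have "\<dots> \<le> L2_set (\<lambda>x. (\<lambda>(k,j). cmod (A $$ (k,j))) x + (\<lambda>(k,j). cmod (B $$ (k,j))) x) ({..<r} \<times> {..<c})"
    by (rule L2_set_mono) (use assms in \<open>auto intro: norm_triangle_ineq\<close>)
  also have "\<dots> \<le> fnorm A + fnorm B"
    unfolding fnorm_eq[OF assms(1)] fnorm_eq[OF assms(2)] by (rule L2_set_triangle_ineq)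
  finally show ?thesis .
qed

lemma fnorm_right_unitary: assumes X: "X \<in> carrier_mat N N" and W: "W \<in> carrier_mat N N"
  and u: "W * adj W = 1\<^sub>m N"
  shows "fnorm (X * W) = fnorm X"
proof -
  have aX: "adj X \<in> carrier_mat N N" and aW: "adj W \<in> carrier_mat N N" using X W by auto
  define M where "M = adj X * X * W"
  have M: "M \<in> carrier_mat N N" using X W aX unfolding M_def by (metis mult_carrier_mat)
  have "adj (X * W) * (X * W) = adj W * M"
    using X W aX aW unfolding M_def by (simp add: adj_mult[OF X W] assoc_mult_mat[of _ N N _ N _ N])
  hence "mtrace (adj (X * W) * (X * W)) = mtrace (M * adj W)"
    using mtrace_comm[OF aW M] by simp
  also have "M * adj W = adj X * X * (W * adj W)"
    unfolding M_def by (rule assoc_mult_mat[of _ N N _ N _ N]) (use X W aX aW in auto)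
  also have "\<dots> = adj X * X" using u X aX by simp
  finally show ?thesis unfolding fnorm_def by simp
qed

lemma fnorm_left_unitary: assumes X: "X \<in> carrier_mat N N" and W: "W \<in> carrier_mat N N"
  and u: "adj W * W = 1\<^sub>m N"
  shows "fnorm (W * X) = fnorm X"
proof -
  have aX: "adj X \<in> carrier_mat N N" and aW: "adj W \<in> carrier_mat N N" using X W by auto
  have "adj (W * X) * (W * X) = adj X * ((adj W * W) * X)"
    using X W aX aW by (simp add: adj_mult[OF W X] assoc_mult_mat[of _ N N _ N _ N])
  also have "\<dots> = adj X * X" using u X aX by simp
  finally show ?thesis unfolding fnorm_def by simp
qed

lemma mat_identity: fixes X Y P Q :: "complex mat" assumes "X \<in> carrier_mat N N" "Y \<in> carrier_mat N N" "P \<in> carrier_mat N N" "Q \<in> carrier_mat N N"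
  shows "(X - P) * Y + P * (Y - Q) = X * Y - P * Q"
proof (rule eq_matI)
  fix i j assume "i < dim_row (X * Y - P * Q)" "j < dim_col (X * Y - P * Q)"
  hence ij: "i < N" "j < N" using assms by auto
  have c1: "X - P \<in> carrier_mat N N" "Y - Q \<in> carrier_mat N N" using assms by auto
  show "((X - P) * Y + P * (Y - Q)) $$ (i,j) = (X * Y - P * Q) $$ (i,j)"
    using assms ij c1
    apply (simp add: rowcol[of _ N N _ N] sum.distrib[symmetric])
    apply (simp add: right_diff_distrib left_diff_distrib sum_subtractf)
    done
qed (use assms in auto)


lemma kron_dim[simp]: "dim_row (kron A B) = dim_row A * dim_row B" "dim_col (kron A B) = dim_col A * dim_col B"
  by (auto simp: kron_def)

lemma kron_index[simp]: "i < dim_row A * dim_row B \<Longrightarrow> j < dim_col A * dim_col B \<Longrightarrow>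
  kron A B $$ (i,j) = A $$ (i div dim_row B, j div dim_col B) * B $$ (i mod dim_row B, j mod dim_col B)"
  by (auto simp: kron_def)

lemma kron_carrier: "A \<in> carrier_mat a b \<Longrightarrow> B \<in> carrier_mat c d \<Longrightarrow> kron A B \<in> carrier_mat (a*c) (b*d)"
  unfolding carrier_mat_def by simp

lemma sum_div_mod: fixes b e :: nat shows "(\<Sum>k<b*e. f (k div e) (k mod e)) = (\<Sum>p<b. \<Sum>q<e. f p q)"
proof -
  have bij: "bij_betw (\<lambda>(p,q). p*e+q) ({..<b} \<times> {..<e}) {..<b*e}"
  proof (rule bij_betw_imageI)
    show "inj_on (\<lambda>(p,q). p*e+q) ({..<b} \<times> {..<e})"
    proof (rule inj_onI, clarify)
      fix p q p' q' assume "q < e" "q' < e" "p * e + q = p' * e + q'"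
      thus "p = p' \<and> q = q'"
        by (metis add.commute div_mult_self1 div_less mod_mult_self1 mod_less not_less0 add_cancel_right_left less_nat_zero_code)
    qed
    show "(\<lambda>(p,q). p*e+q) ` ({..<b} \<times> {..<e}) = {..<b*e}"
    proof
      show "(\<lambda>(p,q). p*e+q) ` ({..<b} \<times> {..<e}) \<subseteq> {..<b*e}"
      proof clarify
        fix p q assume "p < b" "q < e"
        hence "p * e + q < p * e + e" by simp
        also have "\<dots> = Suc p * e" by simp
        also have "\<dots> \<le> b * e" using \<open>p < b\<close> by (intro mult_right_mono) auto
        finally show "p * e + q < b * e" .
      qed
      show "{..<b*e} \<subseteq> (\<lambda>(p,q). p*e+q) ` ({..<b} \<times> {..<e})"
      proof
        fix k assume k: "k \<in> {..<b*e}"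
        hence e: "e > 0" by (cases e) auto
        have "k = (\<lambda>(p,q). p*e+q) (k div e, k mod e)" by simp
        moreover have "(k div e, k mod e) \<in> {..<b} \<times> {..<e}"
          using k e by (auto simp: less_mult_imp_div_less)
        ultimately show "k \<in> (\<lambda>(p,q). p*e+q) ` ({..<b} \<times> {..<e})" by blast
      qed
    qed
  qed
  have "(\<Sum>k<b*e. f (k div e) (k mod e)) = (\<Sum>x\<in>{..<b} \<times> {..<e}. (\<lambda>k. f (k div e) (k mod e)) ((\<lambda>(p,q). p*e+q) x))"
    by (rule sum.reindex_bij_betw[OF bij, symmetric])
  also have "\<dots> = (\<Sum>x\<in>{..<b} \<times> {..<e}. f (fst x) (snd x))"
    by (rule sum.cong) auto
  also have "\<dots> = (\<Sum>p<b. \<Sum>q<e. f p q)"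
    by (simp add: sum.cartesian_product split_beta)
  finally show ?thesis .
qed

lemma kron_mult: assumes A: "A \<in> carrier_mat a b" and C: "C \<in> carrier_mat b c"
  and B: "B \<in> carrier_mat d e" and D: "D \<in> carrier_mat e f"
  shows "kron A B * kron C D = kron (A * C) (B * D)"
proof (rule eq_matI)
  show "dim_row (kron A B * kron C D) = dim_row (kron (A * C) (B * D))"
    "dim_col (kron A B * kron C D) = dim_col (kron (A * C) (B * D))" using A B C D by auto
  fix i j assume "i < dim_row (kron (A * C) (B * D))" "j < dim_col (kron (A * C) (B * D))"
  hence i: "i < a * d" and j: "j < c * f" using A B C D by auto
  have d: "d > 0" using i by (cases d) auto
  have f: "f > 0" using j by (cases f) auto
  have id: "i div d < a" "i mod d < d" using i d by (auto simp: less_mult_imp_div_less)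
  have jd: "j div f < c" "j mod f < f" using j f by (auto simp: less_mult_imp_div_less)
  have "(kron A B * kron C D) $$ (i,j) = (\<Sum>k<b*e. kron A B $$ (i,k) * kron C D $$ (k,j))"
    by (rule mult_index[OF kron_carrier[OF A B] kron_carrier[OF C D] i j])
  also have "\<dots> = (\<Sum>k<b*e. (\<lambda>p q. (A $$ (i div d, p) * C $$ (p, j div f)) * (B $$ (i mod d, q) * D $$ (q, j mod f))) (k div e) (k mod e))"
  proof (rule sum.cong[OF refl])
    fix k assume k: "k \<in> {..<b*e}"
    thus "kron A B $$ (i,k) * kron C D $$ (k,j) = (\<lambda>p q. (A $$ (i div d, p) * C $$ (p, j div f)) * (B $$ (i mod d, q) * D $$ (q, j mod f))) (k div e) (k mod e)"
      using A B C D i j by (simp add: ac_simps)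
  qed
  also have "\<dots> = (\<Sum>p<b. \<Sum>q<e. (A $$ (i div d, p) * C $$ (p, j div f)) * (B $$ (i mod d, q) * D $$ (q, j mod f)))"
    by (rule sum_div_mod)
  also have "\<dots> = (\<Sum>p<b. A $$ (i div d, p) * C $$ (p, j div f)) * (\<Sum>q<e. B $$ (i mod d, q) * D $$ (q, j mod f))"
    by (simp add: sum_product)
  also have "\<dots> = (A * C) $$ (i div d, j div f) * (B * D) $$ (i mod d, j mod f)"
    using mult_index[OF A C id(1) jd(1)] mult_index[OF B D id(2) jd(2)] by simp
  also have "\<dots> = kron (A * C) (B * D) $$ (i,j)"
    using A B C D i j by simp
  finally show "(kron A B * kron C D) $$ (i,j) = kron (A * C) (B * D) $$ (i,j)" .
qed

lemma kron_bounds: assumes "i < dim_row A * dim_row B" "j < dim_col A * dim_col B"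
  shows "i div dim_row B < dim_row A" "j div dim_col B < dim_col A" "i mod dim_row B < dim_row B" "j mod dim_col B < dim_col B"
proof -
  have "dim_col B > 0" using assms by (cases "dim_col B") auto
  moreover have "dim_row B > 0" using assms by (cases "dim_row B") auto
  ultimately show "i div dim_row B < dim_row A" "j div dim_col B < dim_col A" "i mod dim_row B < dim_row B" "j mod dim_col B < dim_col B"
    using assms by (auto simp: less_mult_imp_div_less)
qed

lemma kron_smult_left: "kron (c \<cdot>\<^sub>m A) B = c \<cdot>\<^sub>m kron A B"
  by (rule eq_matI) (auto simp: kron_bounds)

lemma kron_smult_right: "kron A (c \<cdot>\<^sub>m B) = c \<cdot>\<^sub>m kron A B"
  by (rule eq_matI) (auto simp: kron_bounds)

lemma kron_adj: "adj (kron A B) = kron (adj A) (adj B)"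
proof (rule eq_matI)
  fix i j assume "i < dim_row (kron (adj A) (adj B))" "j < dim_col (kron (adj A) (adj B))"
  hence i: "i < dim_col A * dim_col B" and j: "j < dim_row A * dim_row B" by auto
  have "dim_col B > 0" using i by (cases "dim_col B") auto
  moreover have "dim_row B > 0" using j by (cases "dim_row B") auto
  ultimately show "adj (kron A B) $$ (i,j) = kron (adj A) (adj B) $$ (i,j)"
    using i j by (simp add: less_mult_imp_div_less)
qed auto

lemma kron_one: "kron (1\<^sub>m a) (1\<^sub>m b) = 1\<^sub>m (a * b)"
proof (rule eq_matI)
  fix i j assume "i < dim_row (1\<^sub>m (a * b))" "j < dim_col (1\<^sub>m (a * b))"
  hence i: "i < a * b" and j: "j < a * b" by auto
  have b: "b > 0" using i by (cases b) auto
  have eq: "(i = j) = (i div b = j div b \<and> i mod b = j mod b)"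
    by (metis div_mult_mod_eq)
  show "kron (1\<^sub>m a) (1\<^sub>m b) $$ (i,j) = 1\<^sub>m (a * b) $$ (i,j)"
    using i j b eq by (simp add: less_mult_imp_div_less)
qed auto


lemma pauli1_carrier: "pauli1 k \<in> carrier_mat 2 2"
  unfolding pauli1_def carrier_mat_def mat_of_rows_list_def by auto

lemma pauli1_dim[simp]: "dim_row (pauli1 k) = 2" "dim_col (pauli1 k) = 2"
  using pauli1_carrier[of k] by auto

lemma mat2I: fixes A B :: "complex mat"
  assumes "A \<in> carrier_mat 2 2" "B \<in> carrier_mat 2 2"
    "A $$ (0,0) = B $$ (0,0)" "A $$ (0,1) = B $$ (0,1)" "A $$ (1,0) = B $$ (1,0)" "A $$ (1,1) = B $$ (1,1)"
  shows "A = B"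
proof (rule eq_matI)
  fix i j assume "i < dim_row B" "j < dim_col B"
  hence "i < 2" "j < 2" using assms by auto
  hence "i = 0 \<or> i = 1" "j = 0 \<or> j = 1" by auto
  thus "A $$ (i,j) = B $$ (i,j)" using assms by auto
qed (use assms in auto)

lemma sum2: "(\<Sum>k::nat<2. f k) = f 0 + (f 1 :: 'a :: comm_monoid_add)"
  by (simp add: numeral_2_eq_2)

lemma mult2: "A \<in> carrier_mat 2 2 \<Longrightarrow> B \<in> carrier_mat 2 2 \<Longrightarrow> i < 2 \<Longrightarrow> j < 2 \<Longrightarrow>
  (A * B) $$ (i,j) = A $$ (i,0) * B $$ (0,j) + A $$ (i,1) * B $$ (1,j)"
proof -
  assume a: "A \<in> carrier_mat 2 2" "B \<in> carrier_mat 2 2" "i < 2" "j < 2"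
  have "(A * B) $$ (i,j) = (\<Sum>k<2. A $$ (i,k) * B $$ (k,j))" by (rule mult_index[OF a])
  also have "\<dots> = A $$ (i,0) * B $$ (0,j) + A $$ (i,1) * B $$ (1,j)" by (simp only: sum2)
  finally show ?thesis .
qed

definition pmul :: "nat \<Rightarrow> nat \<Rightarrow> nat" where
  "pmul a b = (if a = 0 then b else if b = 0 then a else if a = b then 0 else 6 - a - b)"

lemma pauli1_entries:
  "pauli1 0 $$ (0,0) = 1" "pauli1 0 $$ (0,1) = 0" "pauli1 0 $$ (1,0) = 0" "pauli1 0 $$ (1,1) = 1"
  "pauli1 1 $$ (0,0) = 0" "pauli1 1 $$ (0,1) = 1" "pauli1 1 $$ (1,0) = 1" "pauli1 1 $$ (1,1) = 0"
  "pauli1 2 $$ (0,0) = 0" "pauli1 2 $$ (0,1) = -\<i>" "pauli1 2 $$ (1,0) = \<i>" "pauli1 2 $$ (1,1) = 0"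
  "pauli1 3 $$ (0,0) = 1" "pauli1 3 $$ (0,1) = 0" "pauli1 3 $$ (1,0) = 0" "pauli1 3 $$ (1,1) = -1"
  by (simp_all add: pauli1_def mat_of_rows_list_def)


lemma PM: "pauli1 x * pauli1 y \<in> carrier_mat 2 2" using pauli1_carrier by (metis mult_carrier_mat)
lemma PS: "c \<cdot>\<^sub>m pauli1 k \<in> carrier_mat 2 2" using pauli1_carrier by simp
lemma PE: "i < 2 \<Longrightarrow> j < 2 \<Longrightarrow> (pauli1 x * pauli1 y) $$ (i,j) = pauli1 x $$ (i,0) * pauli1 y $$ (0,j) + pauli1 x $$ (i,1) * pauli1 y $$ (1,j)"
  by (rule mult2[OF pauli1_carrier pauli1_carrier])
lemma PF: "i < 2 \<Longrightarrow> j < 2 \<Longrightarrow> (c \<cdot>\<^sub>m pauli1 k) $$ (i,j) = c * pauli1 k $$ (i,j)"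
  by simp

lemma pc_0_0: "pauli1 0 * pauli1 0 = (\<i> ^ 0) \<cdot>\<^sub>m pauli1 0"
  apply (rule mat2I[OF PM PS])
  apply (simp_all del: index_mult_mat(1) index_smult_mat add: PE PF)
  apply (simp_all add: pauli1_def mat_of_rows_list_def power3_eq_cube)
  done
lemma pc_0_1: "pauli1 0 * pauli1 1 = (\<i> ^ 0) \<cdot>\<^sub>m pauli1 1"
  apply (rule mat2I[OF PM PS])
  apply (simp_all del: index_mult_mat(1) index_smult_mat add: PE PF)
  apply (simp_all add: pauli1_def mat_of_rows_list_def power3_eq_cube)
  done
lemma pc_0_2: "pauli1 0 * pauli1 2 = (\<i> ^ 0) \<cdot>\<^sub>m pauli1 2"
  apply (rule mat2I[OF PM PS])
  apply (simp_all del: index_mult_mat(1) index_smult_mat add: PE PF)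
  apply (simp_all add: pauli1_def mat_of_rows_list_def power3_eq_cube)
  done
lemma pc_0_3: "pauli1 0 * pauli1 3 = (\<i> ^ 0) \<cdot>\<^sub>m pauli1 3"
  apply (rule mat2I[OF PM PS])
  apply (simp_all del: index_mult_mat(1) index_smult_mat add: PE PF)
  apply (simp_all add: pauli1_def mat_of_rows_list_def power3_eq_cube)
  done
lemma pc_1_0: "pauli1 1 * pauli1 1 = (\<i> ^ 0) \<cdot>\<^sub>m pauli1 0"
  apply (rule mat2I[OF PM PS])
  apply (simp_all del: index_mult_mat(1) index_smult_mat add: PE PF)
  apply (simp_all add: pauli1_def mat_of_rows_list_def power3_eq_cube)
  done
lemma pc_1_1: "pauli1 1 * pauli1 0 = (\<i> ^ 0) \<cdot>\<^sub>m pauli1 1"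
  apply (rule mat2I[OF PM PS])
  apply (simp_all del: index_mult_mat(1) index_smult_mat add: PE PF)
  apply (simp_all add: pauli1_def mat_of_rows_list_def power3_eq_cube)
  done
lemma pc_1_2: "pauli1 1 * pauli1 3 = (\<i> ^ 3) \<cdot>\<^sub>m pauli1 2"
  apply (rule mat2I[OF PM PS])
  apply (simp_all del: index_mult_mat(1) index_smult_mat add: PE PF)
  apply (simp_all add: pauli1_def mat_of_rows_list_def power3_eq_cube)
  done
lemma pc_1_3: "pauli1 1 * pauli1 2 = (\<i> ^ 1) \<cdot>\<^sub>m pauli1 3"
  apply (rule mat2I[OF PM PS])
  apply (simp_all del: index_mult_mat(1) index_smult_mat add: PE PF)
  apply (simp_all add: pauli1_def mat_of_rows_list_def power3_eq_cube)
  done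
lemma pc_2_0: "pauli1 2 * pauli1 2 = (\<i> ^ 0) \<cdot>\<^sub>m pauli1 0"
  apply (rule mat2I[OF PM PS])
  apply (simp_all del: index_mult_mat(1) index_smult_mat add: PE PF)
  apply (simp_all add: pauli1_def mat_of_rows_list_def power3_eq_cube)
  done
lemma pc_2_1: "pauli1 2 * pauli1 3 = (\<i> ^ 1) \<cdot>\<^sub>m pauli1 1"
  apply (rule mat2I[OF PM PS])
  apply (simp_all del: index_mult_mat(1) index_smult_mat add: PE PF)
  apply (simp_all add: pauli1_def mat_of_rows_list_def power3_eq_cube)
  done
lemma pc_2_2: "pauli1 2 * pauli1 0 = (\<i> ^ 0) \<cdot>\<^sub>m pauli1 2"
  apply (rule mat2I[OF PM PS])
  apply (simp_all del: index_mult_mat(1) index_smult_mat add: PE PF)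
  apply (simp_all add: pauli1_def mat_of_rows_list_def power3_eq_cube)
  done
lemma pc_2_3: "pauli1 2 * pauli1 1 = (\<i> ^ 3) \<cdot>\<^sub>m pauli1 3"
  apply (rule mat2I[OF PM PS])
  apply (simp_all del: index_mult_mat(1) index_smult_mat add: PE PF)
  apply (simp_all add: pauli1_def mat_of_rows_list_def power3_eq_cube)
  done
lemma pc_3_0: "pauli1 3 * pauli1 3 = (\<i> ^ 0) \<cdot>\<^sub>m pauli1 0"
  apply (rule mat2I[OF PM PS])
  apply (simp_all del: index_mult_mat(1) index_smult_mat add: PE PF)
  apply (simp_all add: pauli1_def mat_of_rows_list_def power3_eq_cube)
  done
lemma pc_3_1: "pauli1 3 * pauli1 2 = (\<i> ^ 3) \<cdot>\<^sub>m pauli1 1"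
  apply (rule mat2I[OF PM PS])
  apply (simp_all del: index_mult_mat(1) index_smult_mat add: PE PF)
  apply (simp_all add: pauli1_def mat_of_rows_list_def power3_eq_cube)
  done
lemma pc_3_2: "pauli1 3 * pauli1 1 = (\<i> ^ 1) \<cdot>\<^sub>m pauli1 2"
  apply (rule mat2I[OF PM PS])
  apply (simp_all del: index_mult_mat(1) index_smult_mat add: PE PF)
  apply (simp_all add: pauli1_def mat_of_rows_list_def power3_eq_cube)
  done
lemma pc_3_3: "pauli1 3 * pauli1 0 = (\<i> ^ 0) \<cdot>\<^sub>m pauli1 3"
  apply (rule mat2I[OF PM PS])
  apply (simp_all del: index_mult_mat(1) index_smult_mat add: PE PF)
  apply (simp_all add: pauli1_def mat_of_rows_list_def power3_eq_cube)
  done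

definition ph :: "nat \<Rightarrow> nat \<Rightarrow> nat" where
  "ph a b = (if a = 0 \<or> b = 0 \<or> a = b then 0 else if (a,b) \<in> {(1,3),(2,1),(3,2)} then 1 else 3)"

lemma pauli1_mult_ph: assumes "a < 4" "b < 4"
  shows "pauli1 a * pauli1 (pmul a b) = (\<i> ^ ph a b) \<cdot>\<^sub>m pauli1 b"
proof -
  have ca: "a = 0 \<or> a = 1 \<or> a = 2 \<or> a = 3" and cb: "b = 0 \<or> b = 1 \<or> b = 2 \<or> b = 3" using assms by auto
  show ?thesis
    using ca cb
    by (elim disjE) (simp_all add: pmul_def ph_def pc_0_0 pc_0_1 pc_0_2 pc_0_3 pc_1_0 pc_1_1 pc_1_2 pc_1_3 pc_2_0 pc_2_1 pc_2_2 pc_2_3 pc_3_0 pc_3_1 pc_3_2 pc_3_3 pc_0_0[unfolded One_nat_def] pc_0_1[unfolded One_nat_def] pc_0_2[unfolded One_nat_def] pc_0_3[unfolded One_nat_def] pc_1_0[unfolded One_nat_def] pc_1_1[unfolded One_nat_def] pc_1_2[unfolded One_nat_def] pc_1_3[unfolded One_nat_def] pc_2_0[unfolded One_nat_def] pc_2_1[unfolded One_nat_def] pc_2_2[unfolded One_nat_def] pc_2_3[unfolded One_nat_def] pc_3_0[unfolded One_nat_def] pc_3_1[unfolded One_nat_def] pc_3_2[unfolded One_nat_def] pc_3_3[unfolded One_nat_def])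
qed

lemma pauli1_mult: assumes "a < 4" "b < 4"
  shows "\<exists>k. pauli1 a * pauli1 (pmul a b) = (\<i> ^ k) \<cdot>\<^sub>m pauli1 b"
  using pauli1_mult_ph[OF assms] by blast

lemma PA: "adj (pauli1 k) \<in> carrier_mat 2 2" using pauli1_carrier by simp
lemma PM1: "adj (pauli1 k) * pauli1 k \<in> carrier_mat 2 2" using PA pauli1_carrier by (metis mult_carrier_mat)
lemma PM2: "pauli1 k * adj (pauli1 k) \<in> carrier_mat 2 2" using PA pauli1_carrier by (metis mult_carrier_mat)
lemma PO: "1\<^sub>m 2 \<in> carrier_mat 2 2" by simp
lemma PE1: "i < 2 \<Longrightarrow> j < 2 \<Longrightarrow> (adj (pauli1 k) * pauli1 k) $$ (i,j) = cnj (pauli1 k $$ (0,i)) * pauli1 k $$ (0,j) + cnj (pauli1 k $$ (1,i)) * pauli1 k $$ (1,j)"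
  by (subst mult2[OF PA pauli1_carrier]) auto
lemma PE2: "i < 2 \<Longrightarrow> j < 2 \<Longrightarrow> (pauli1 k * adj (pauli1 k)) $$ (i,j) = pauli1 k $$ (i,0) * cnj (pauli1 k $$ (j,0)) + pauli1 k $$ (i,1) * cnj (pauli1 k $$ (j,1))"
  by (subst mult2[OF pauli1_carrier PA]) auto
lemma PO1: "i < 2 \<Longrightarrow> j < 2 \<Longrightarrow> (1\<^sub>m 2 :: complex mat) $$ (i,j) = (if i = j then 1 else 0)" by simp
lemma pu_0_a: "adj (pauli1 0) * pauli1 0 = 1\<^sub>m 2"
  apply (rule mat2I[OF PM1 PO])
  apply (simp_all del: index_mult_mat(1) index_one_mat add: PE1 PO1)
  apply (simp_all add: pauli1_def mat_of_rows_list_def)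
  done
lemma pu_0_b: "pauli1 0 * adj (pauli1 0) = 1\<^sub>m 2"
  apply (rule mat2I[OF PM2 PO])
  apply (simp_all del: index_mult_mat(1) index_one_mat add: PE2 PO1)
  apply (simp_all add: pauli1_def mat_of_rows_list_def)
  done
lemma pu_1_a: "adj (pauli1 1) * pauli1 1 = 1\<^sub>m 2"
  apply (rule mat2I[OF PM1 PO])
  apply (simp_all del: index_mult_mat(1) index_one_mat add: PE1 PO1)
  apply (simp_all add: pauli1_def mat_of_rows_list_def)
  done
lemma pu_1_b: "pauli1 1 * adj (pauli1 1) = 1\<^sub>m 2"
  apply (rule mat2I[OF PM2 PO])
  apply (simp_all del: index_mult_mat(1) index_one_mat add: PE2 PO1)
  apply (simp_all add: pauli1_def mat_of_rows_list_def)
  done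
lemma pu_2_a: "adj (pauli1 2) * pauli1 2 = 1\<^sub>m 2"
  apply (rule mat2I[OF PM1 PO])
  apply (simp_all del: index_mult_mat(1) index_one_mat add: PE1 PO1)
  apply (simp_all add: pauli1_def mat_of_rows_list_def)
  done
lemma pu_2_b: "pauli1 2 * adj (pauli1 2) = 1\<^sub>m 2"
  apply (rule mat2I[OF PM2 PO])
  apply (simp_all del: index_mult_mat(1) index_one_mat add: PE2 PO1)
  apply (simp_all add: pauli1_def mat_of_rows_list_def)
  done
lemma pu_3_a: "adj (pauli1 3) * pauli1 3 = 1\<^sub>m 2"
  apply (rule mat2I[OF PM1 PO])
  apply (simp_all del: index_mult_mat(1) index_one_mat add: PE1 PO1)
  apply (simp_all add: pauli1_def mat_of_rows_list_def)
  done
lemma pu_3_b: "pauli1 3 * adj (pauli1 3) = 1\<^sub>m 2"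
  apply (rule mat2I[OF PM2 PO])
  apply (simp_all del: index_mult_mat(1) index_one_mat add: PE2 PO1)
  apply (simp_all add: pauli1_def mat_of_rows_list_def)
  done

lemma pauli1_unitary0: assumes "k < 4"
  shows "adj (pauli1 k) * pauli1 k = 1\<^sub>m 2 \<and> pauli1 k * adj (pauli1 k) = 1\<^sub>m 2"
proof -
  have ca: "k = 0 \<or> k = 1 \<or> k = 2 \<or> k = 3" using assms by auto
  thus ?thesis by (elim disjE) (simp_all add: pu_0_a pu_0_b pu_1_a pu_1_b pu_2_a pu_2_b pu_3_a pu_3_b pu_0_a[unfolded One_nat_def] pu_0_b[unfolded One_nat_def] pu_1_a[unfolded One_nat_def] pu_1_b[unfolded One_nat_def] pu_2_a[unfolded One_nat_def] pu_2_b[unfolded One_nat_def] pu_3_a[unfolded One_nat_def] pu_3_b[unfolded One_nat_def])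
qed

lemma pauli1_unitary: "adj (pauli1 k) * pauli1 k = 1\<^sub>m 2" "pauli1 k * adj (pauli1 k) = 1\<^sub>m 2"
proof -
  have "pauli1 k = pauli1 (min k 3)" by (simp add: pauli1_def)
  moreover have "min k 3 < 4" by simp
  ultimately show "adj (pauli1 k) * pauli1 k = 1\<^sub>m 2" "pauli1 k * adj (pauli1 k) = 1\<^sub>m 2"
    using pauli1_unitary0[of "min k 3"] by auto
qed



lemma pstr_Nil[simp]: "pauli_str [] = 1\<^sub>m 1" by (simp add: pauli_str_def)
lemma pstr_Cons[simp]: "pauli_str (a # xs) = kron (pauli1 a) (pauli_str xs)" by (simp add: pauli_str_def)

lemma pstr_carrier: "pauli_str xs \<in> carrier_mat (2 ^ length xs) (2 ^ length xs)"
proof (induction xs)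
  case Nil thus ?case by simp
next
  case (Cons a xs)
  show ?case using kron_carrier[OF pauli1_carrier Cons.IH, of a] by simp
qed

lemma pstr_unitary: "adj (pauli_str xs) * pauli_str xs = 1\<^sub>m (2 ^ length xs) \<and> pauli_str xs * adj (pauli_str xs) = 1\<^sub>m (2 ^ length xs)"
proof (induction xs)
  case Nil thus ?case by simp
next
  case (Cons a xs)
  have S: "pauli_str xs \<in> carrier_mat (2 ^ length xs) (2 ^ length xs)" by (rule pstr_carrier)
  have aS: "adj (pauli_str xs) \<in> carrier_mat (2 ^ length xs) (2 ^ length xs)" using S by simp
  have "adj (pauli_str (a # xs)) * pauli_str (a # xs) = kron (adj (pauli1 a) * pauli1 a) (adj (pauli_str xs) * pauli_str xs)"
    by (simp add: kron_adj kron_mult[OF PA pauli1_carrier aS S])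
  moreover have "pauli_str (a # xs) * adj (pauli_str (a # xs)) = kron (pauli1 a * adj (pauli1 a)) (pauli_str xs * adj (pauli_str xs))"
    by (simp add: kron_adj kron_mult[OF pauli1_carrier PA S aS])
  ultimately show ?case using Cons.IH by (simp add: pauli1_unitary kron_one)
qed

lemma pmul_lt: "a < 4 \<Longrightarrow> b < 4 \<Longrightarrow> pmul a b < 4"
  by (auto simp: pmul_def)

lemma pmul_inv: "a < 4 \<Longrightarrow> b < 4 \<Longrightarrow> pmul a (pmul a b) = b"
proof -
  assume "a < 4" "b < 4"
  hence "a = 0 \<or> a = 1 \<or> a = 2 \<or> a = 3" "b = 0 \<or> b = 1 \<or> b = 2 \<or> b = 3" by auto
  thus ?thesis by (elim disjE) (simp_all add: pmul_def)
qed

lemma pmul_inv2: "a < 4 \<Longrightarrow> b < 4 \<Longrightarrow> pmul (pmul a b) b = a"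
proof -
  assume "a < 4" "b < 4"
  hence "a = 0 \<or> a = 1 \<or> a = 2 \<or> a = 3" "b = 0 \<or> b = 1 \<or> b = 2 \<or> b = 3" by auto
  thus ?thesis by (elim disjE) (simp_all add: pmul_def)
qed

lemma map2_idx: assumes "xs \<in> pauli_idx n" "ys \<in> pauli_idx n" shows "map2 pmul xs ys \<in> pauli_idx n"
proof -
  have l: "length xs = n" "length ys = n" and s: "set xs \<subseteq> {0..<4}" "set ys \<subseteq> {0..<4}"
    using assms unfolding pauli_idx_def by auto
  have "\<And>i. i < n \<Longrightarrow> pmul (xs ! i) (ys ! i) < 4"
  proof -
    fix i assume "i < n"
    hence "xs ! i \<in> set xs" "ys ! i \<in> set ys" using l by auto
    hence "xs ! i < 4" "ys ! i < 4" using s by auto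
    thus "pmul (xs ! i) (ys ! i) < 4" by (rule pmul_lt)
  qed
  thus ?thesis unfolding pauli_idx_def using l by (auto simp: set_zip)
qed

lemma map2_inv: "length xs = length ys \<Longrightarrow> set xs \<subseteq> {0..<4} \<Longrightarrow> set ys \<subseteq> {0..<4} \<Longrightarrow>
  map2 pmul xs (map2 pmul xs ys) = ys"
proof (induction xs arbitrary: ys)
  case Nil thus ?case by simp
next
  case (Cons a xs) thus ?case by (cases ys) (auto simp: pmul_inv)
qed

lemma map2_inv2: "length xs = length ys \<Longrightarrow> set xs \<subseteq> {0..<4} \<Longrightarrow> set ys \<subseteq> {0..<4} \<Longrightarrow>
  map2 pmul (map2 pmul xs ys) ys = xs"
proof (induction xs arbitrary: ys)
  case Nil thus ?case by simp
next
  case (Cons a xs) thus ?case by (cases ys) (auto simp: pmul_inv2)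
qed

lemma smult_assoc_m: "a \<cdot>\<^sub>m (b \<cdot>\<^sub>m A) = (a * b :: complex) \<cdot>\<^sub>m A"
  by (rule eq_matI) auto

lemma pstr_mult: "length xs = length ys \<Longrightarrow> set xs \<subseteq> {0..<4} \<Longrightarrow> set ys \<subseteq> {0..<4} \<Longrightarrow>
  \<exists>k. pauli_str xs * pauli_str (map2 pmul xs ys) = (\<i> ^ k) \<cdot>\<^sub>m pauli_str ys"
proof (induction xs arbitrary: ys)
  case Nil thus ?case by (intro exI[of _ 0]) (rule eq_matI, auto)
next
  case (Cons a xs)
  then obtain b ys' where ys: "ys = b # ys'" by (cases ys) auto
  have l: "length xs = length ys'" and sx: "set xs \<subseteq> {0..<4}" and sy: "set ys' \<subseteq> {0..<4}" and ab: "a < 4" "b < 4"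
    using Cons.prems ys by auto
  obtain k2 where k2: "pauli_str xs * pauli_str (map2 pmul xs ys') = (\<i> ^ k2) \<cdot>\<^sub>m pauli_str ys'"
    using Cons.IH[OF l sx sy] by blast
  obtain k1 where k1: "pauli1 a * pauli1 (pmul a b) = (\<i> ^ k1) \<cdot>\<^sub>m pauli1 b"
    using pauli1_mult[OF ab] by blast
  have lz: "length (map2 pmul xs ys') = length xs" using l by simp
  have Sz: "pauli_str (map2 pmul xs ys') \<in> carrier_mat (2 ^ length xs) (2 ^ length xs)"
    using pstr_carrier[of "map2 pmul xs ys'"] lz by simp
  have "pauli_str (a # xs) * pauli_str (map2 pmul (a # xs) ys)
      = kron (pauli1 a * pauli1 (pmul a b)) (pauli_str xs * pauli_str (map2 pmul xs ys'))"
    using ys by (simp add: kron_mult[OF pauli1_carrier pauli1_carrier pstr_carrier Sz])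
  also have "\<dots> = (\<i> ^ k1 * \<i> ^ k2) \<cdot>\<^sub>m pauli_str ys"
    unfolding k1 k2 ys by (simp add: kron_smult_left kron_smult_right smult_assoc_m mult.commute)
  also have "\<dots> = (\<i> ^ (k1 + k2)) \<cdot>\<^sub>m pauli_str ys" by (simp add: power_add)
  finally show ?case by blast
qed

lemma i_pow_mod: "\<i> ^ m = \<i> ^ (m mod 4)"
proof -
  have "\<i> ^ m = \<i> ^ (4 * (m div 4) + m mod 4)" by simp
  also have "\<dots> = (\<i> ^ 4) ^ (m div 4) * \<i> ^ (m mod 4)" by (simp only: power_add power_mult)
  also have "\<dots> = \<i> ^ (m mod 4)" by simp
  finally show ?thesis .
qed

lemma pg_carrier: "P \<in> pauli_group n \<Longrightarrow> P \<in> carrier_mat (2^n) (2^n)"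
  unfolding pauli_group_def pauli_idx_def using pstr_carrier by auto

lemma smult_mult_smult: "A \<in> carrier_mat a b \<Longrightarrow> B \<in> carrier_mat b c \<Longrightarrow>
  (x \<cdot>\<^sub>m A) * (y \<cdot>\<^sub>m B) = (x * y) \<cdot>\<^sub>m (A * B :: complex mat)"
proof -
  assume A: "A \<in> carrier_mat a b" and B: "B \<in> carrier_mat b c"
  have yB: "y \<cdot>\<^sub>m B \<in> carrier_mat b c" using B by simp
  have "(x \<cdot>\<^sub>m A) * (y \<cdot>\<^sub>m B) = x \<cdot>\<^sub>m (A * (y \<cdot>\<^sub>m B))" by (rule mult_smult_assoc_mat[OF A yB])
  also have "A * (y \<cdot>\<^sub>m B) = y \<cdot>\<^sub>m (A * B)" by (rule mult_smult_distrib[OF A B])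
  finally show ?thesis by (simp add: smult_assoc_m)
qed

lemma pg_mult: assumes "P \<in> pauli_group n" "Q \<in> pauli_group n"
  shows "(\<i> ^ j) \<cdot>\<^sub>m (P * Q) \<in> pauli_group n"
proof -
  obtain k1 xs where P: "P = (\<i> ^ k1) \<cdot>\<^sub>m pauli_str xs" and xs: "xs \<in> pauli_idx n"
    using assms(1) unfolding pauli_group_def by blast
  obtain k2 ys where Q: "Q = (\<i> ^ k2) \<cdot>\<^sub>m pauli_str ys" and ys: "ys \<in> pauli_idx n"
    using assms(2) unfolding pauli_group_def by blast
  define zs where "zs = map2 pmul xs ys"
  have zs: "zs \<in> pauli_idx n" unfolding zs_def by (rule map2_idx[OF xs ys])
  have "map2 pmul xs zs = ys" unfolding zs_def
    using xs ys by (intro map2_inv) (auto simp: pauli_idx_def)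
  moreover obtain k where "pauli_str xs * pauli_str (map2 pmul xs zs) = (\<i> ^ k) \<cdot>\<^sub>m pauli_str zs"
    using pstr_mult[of xs zs] xs zs by (auto simp: pauli_idx_def)
  ultimately have k: "pauli_str xs * pauli_str ys = (\<i> ^ k) \<cdot>\<^sub>m pauli_str zs" by simp
  have "(\<i> ^ j) \<cdot>\<^sub>m (P * Q) = (\<i> ^ j) \<cdot>\<^sub>m ((\<i> ^ k1 * \<i> ^ k2) \<cdot>\<^sub>m (pauli_str xs * pauli_str ys))"
  proof -
    have "length xs = n" "length ys = n" using xs ys unfolding pauli_idx_def by auto
    hence "pauli_str xs \<in> carrier_mat (2^n) (2^n)" "pauli_str ys \<in> carrier_mat (2^n) (2^n)"
      using pstr_carrier[of xs] pstr_carrier[of ys] by auto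
    thus ?thesis unfolding P Q by (simp add: smult_mult_smult)
  qed
  also have "\<dots> = (\<i> ^ (j + k1 + k2 + k)) \<cdot>\<^sub>m pauli_str zs"
    unfolding k by (simp add: smult_assoc_m power_add mult.assoc)
  also have "\<dots> = (\<i> ^ ((j + k1 + k2 + k) mod 4)) \<cdot>\<^sub>m pauli_str zs"
    by (subst i_pow_mod) simp
  finally show ?thesis using zs unfolding pauli_group_def by force
qed



lemma smult_1_m: "(1::complex) \<cdot>\<^sub>m A = A" by (rule eq_matI) auto

lemma adj_adj: "adj (adj A) = A" by (rule eq_matI) auto

lemma cnj_mult_self: "cmod c = 1 \<Longrightarrow> cnj c * c = 1"
  by (metis complex_norm_square mult.commute of_real_1 power_one)

lemma phase_unitary: assumes "cmod c = 1" "A \<in> carrier_mat N N"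
  shows "adj (c \<cdot>\<^sub>m A) * (c \<cdot>\<^sub>m A) = adj A * A" "(c \<cdot>\<^sub>m A) * adj (c \<cdot>\<^sub>m A) = A * adj A"
proof -
  have aA: "adj A \<in> carrier_mat N N" using assms by simp
  show "adj (c \<cdot>\<^sub>m A) * (c \<cdot>\<^sub>m A) = adj A * A"
    unfolding adj_smult smult_mult_smult[OF aA assms(2)] cnj_mult_self[OF assms(1)] smult_1_m ..
  show "(c \<cdot>\<^sub>m A) * adj (c \<cdot>\<^sub>m A) = A * adj A"
    unfolding adj_smult smult_mult_smult[OF assms(2) aA] using cnj_mult_self[OF assms(1)]
    by (simp add: mult.commute smult_1_m)
qed

lemma pg_unitary: assumes "P \<in> pauli_group n" shows "adj P * P = 1\<^sub>m (2^n)"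
proof -
  obtain k xs where P: "P = (\<i> ^ k) \<cdot>\<^sub>m pauli_str xs" and xs: "xs \<in> pauli_idx n"
    using assms unfolding pauli_group_def by blast
  have l: "length xs = n" using xs unfolding pauli_idx_def by auto
  have "cmod (\<i> ^ k) = 1" by (simp add: norm_power)
  thus ?thesis unfolding P using phase_unitary(1)[OF _ pstr_carrier[of xs]] pstr_unitary[of xs] l by simp
qed

lemma phase_dist_nonneg: "phase_dist A B \<ge> 0"
  unfolding phase_dist_def
  by (rule cINF_greatest) (auto simp: fnorm_nonneg)

lemma bdd_theta: "bdd_below ((\<lambda>\<theta>. fnorm (exp (\<i> * complex_of_real \<theta>) \<cdot>\<^sub>m A - B) / sqrt (2 * real (dim_row A))) ` S)"
  by (rule bdd_belowI[of _ 0]) (auto simp: fnorm_nonneg)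

lemma bdd_P: "bdd_below ((\<lambda>B. phase_dist A B) ` S)"
  by (rule bdd_belowI[of _ 0]) (auto simp: phase_dist_nonneg)

lemma close: assumes "set_dist A S < r" "S \<noteq> {}"
  shows "\<exists>P\<in>S. \<exists>\<theta>\<in>{0..<2*pi}. fnorm (exp (\<i> * complex_of_real \<theta>) \<cdot>\<^sub>m A - P) / sqrt (2 * real (dim_row A)) < r"
proof -
  obtain P where P: "P \<in> S" "phase_dist A P < r"
    using assms cINF_less_iff[OF assms(2) bdd_P] unfolding set_dist_def by blast
  have ne: "{0..<2*pi} \<noteq> {}" using pi_gt_zero by auto
  show ?thesis using P cINF_less_iff[OF ne bdd_theta] unfolding phase_dist_def by blast
qed

lemma upper: assumes "P \<in> S" "\<theta> \<in> {0..<2*pi}"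
  shows "set_dist A S \<le> fnorm (exp (\<i> * complex_of_real \<theta>) \<cdot>\<^sub>m A - P) / sqrt (2 * real (dim_row A))"
proof -
  have "set_dist A S \<le> phase_dist A P"
    unfolding set_dist_def by (rule cINF_lower[OF bdd_P assms(1)])
  also have "\<dots> \<le> fnorm (exp (\<i> * complex_of_real \<theta>) \<cdot>\<^sub>m A - P) / sqrt (2 * real (dim_row A))"
    unfolding phase_dist_def by (rule cINF_lower[OF bdd_theta assms(2)])
  finally show ?thesis .
qed

lemma combine: assumes A: "A \<in> carrier_mat N N" and B: "B \<in> carrier_mat N N"
  and Bu: "B * adj B = 1\<^sub>m N" and P1: "P1 \<in> carrier_mat N N" and P2: "P2 \<in> carrier_mat N N"
  and P1u: "adj P1 * P1 = 1\<^sub>m N" and c: "cmod c = 1"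
  shows "fnorm (exp (\<i> * complex_of_real (t1 + t2)) \<cdot>\<^sub>m (c \<cdot>\<^sub>m (A * B)) - c \<cdot>\<^sub>m (P1 * P2))
     \<le> fnorm (exp (\<i> * complex_of_real t1) \<cdot>\<^sub>m A - P1) + fnorm (exp (\<i> * complex_of_real t2) \<cdot>\<^sub>m B - P2)"
proof -
  define e1 where "e1 = exp (\<i> * complex_of_real t1)"
  define e2 where "e2 = exp (\<i> * complex_of_real t2)"
  define X where "X = e1 \<cdot>\<^sub>m A"
  define Y where "Y = e2 \<cdot>\<^sub>m B"
  have X: "X \<in> carrier_mat N N" and Y: "Y \<in> carrier_mat N N" using A B unfolding X_def Y_def by auto
  have e2: "cmod e2 = 1" unfolding e2_def by simp
  have Yu: "Y * adj Y = 1\<^sub>m N" unfolding Y_def phase_unitary(2)[OF e2 B] by (rule Bu)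
  have e: "exp (\<i> * complex_of_real (t1 + t2)) = e1 * e2"
    unfolding e1_def e2_def by (simp add: distrib_left exp_add)
  have XY: "X * Y = (e1 * e2) \<cdot>\<^sub>m (A * B)" unfolding X_def Y_def by (rule smult_mult_smult[OF A B])
  have AB: "A * B \<in> carrier_mat N N" "P1 * P2 \<in> carrier_mat N N" using A B P1 P2 by auto
  have eq: "exp (\<i> * complex_of_real (t1 + t2)) \<cdot>\<^sub>m (c \<cdot>\<^sub>m (A * B)) - c \<cdot>\<^sub>m (P1 * P2) = c \<cdot>\<^sub>m (X * Y - P1 * P2)"
  proof -
    have d: "dim_row A = N" "dim_col B = N" "dim_row P1 = N" "dim_col P2 = N" using A B P1 P2 by auto
    show ?thesis unfolding e XY by (rule eq_matI) (use d in \<open>auto simp: algebra_simps\<close>)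
  qed
  have "fnorm (exp (\<i> * complex_of_real (t1 + t2)) \<cdot>\<^sub>m (c \<cdot>\<^sub>m (A * B)) - c \<cdot>\<^sub>m (P1 * P2)) = fnorm (X * Y - P1 * P2)"
    unfolding eq fnorm_smult c by simp
  also have "X * Y - P1 * P2 = (X - P1) * Y + P1 * (Y - P2)"
    by (rule mat_identity[OF X Y P1 P2, symmetric])
  also have "fnorm \<dots> \<le> fnorm ((X - P1) * Y) + fnorm (P1 * (Y - P2))"
    by (rule fnorm_triangle[of _ N N]) (use X Y P1 P2 in auto)
  also have "fnorm ((X - P1) * Y) = fnorm (X - P1)"
    by (rule fnorm_right_unitary[OF _ Y Yu]) (use X P1 in auto)
  also have "fnorm (P1 * (Y - P2)) = fnorm (Y - P2)"
    by (rule fnorm_left_unitary[OF _ P1 P1u]) (use Y P2 in auto)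
  finally show ?thesis unfolding X_def Y_def e1_def e2_def .
qed



lemma sq_mult: "A \<in> carrier_mat N N \<Longrightarrow> B \<in> carrier_mat N N \<Longrightarrow> A * B \<in> carrier_mat N N"
  by (rule mult_carrier_mat)

lemma conj_unitary: assumes U: "U \<in> carrier_mat N N" and Uu1: "adj U * U = 1\<^sub>m N" and Uu2: "U * adj U = 1\<^sub>m N"
  and W: "W \<in> carrier_mat N N" and Wu: "W * adj W = 1\<^sub>m N"
  shows "(U * W * adj U) * adj (U * W * adj U) = 1\<^sub>m N"
proof -
  have aU: "adj U \<in> carrier_mat N N" and aW: "adj W \<in> carrier_mat N N" using U W by auto
  have c1: "\<And>Z. Z \<in> carrier_mat N N \<Longrightarrow> adj U * (U * Z) = Z"
  proof -
    fix Z :: "complex mat" assume Z: "Z \<in> carrier_mat N N"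
    have "adj U * (U * Z) = (adj U * U) * Z" by (rule assoc_mult_mat[OF aU U Z, symmetric])
    thus "adj U * (U * Z) = Z" using Uu1 Z by simp
  qed
  have c2: "\<And>Z. Z \<in> carrier_mat N N \<Longrightarrow> W * (adj W * Z) = Z"
  proof -
    fix Z :: "complex mat" assume Z: "Z \<in> carrier_mat N N"
    have "W * (adj W * Z) = (W * adj W) * Z" by (rule assoc_mult_mat[OF W aW Z, symmetric])
    thus "W * (adj W * Z) = Z" using Wu Z by simp
  qed
  have UW: "U * W \<in> carrier_mat N N" using U W by (rule sq_mult)
  have "adj (U * W * adj U) = adj (adj U) * adj (U * W)" by (rule adj_mult[OF UW aU])
  also have "\<dots> = U * (adj W * adj U)" by (simp add: adj_adj adj_mult[OF U W])
  finally have "(U * W * adj U) * adj (U * W * adj U) = (U * W * adj U) * (U * (adj W * adj U))" by simp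
  also have "\<dots> = U * adj U"
    using U W aU aW by (simp add: assoc_mult_mat[of _ N N _ N _ N] sq_mult c1 c2)
  finally show ?thesis using Uu2 by simp
qed

lemma pauli_idx_finite: "finite (pauli_idx n)"
proof -
  have "pauli_idx n = {xs. set xs \<subseteq> {0..<4} \<and> length xs = n}" unfolding pauli_idx_def by auto
  thus ?thesis using finite_lists_length_eq[of "{0..<(4::nat)}" n] by simp
qed

lemma pauli_idx_ne: "replicate n 0 \<in> pauli_idx n"
  unfolding pauli_idx_def by auto

lemma counting: assumes G: "G \<subseteq> pauli_idx n" and y: "y \<in> pauli_idx n"
  and c: "real (card G) \<ge> 2 / 3 * real (card (pauli_idx n))"
  shows "\<exists>x\<in>G. map2 pmul x y \<in> G"
proof (rule ccontr)
  assume no: "\<not> (\<exists>x\<in>G. map2 pmul x y \<in> G)"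
  define f where "f x = map2 pmul x y" for x
  have fin: "finite (pauli_idx n)" by (rule pauli_idx_finite)
  have finG: "finite G" using G fin by (rule finite_subset)
  have inv: "\<And>x. x \<in> pauli_idx n \<Longrightarrow> f (f x) = x"
    unfolding f_def using y by (intro map2_inv2) (auto simp: pauli_idx_def)
  have inj: "inj_on f G"
    by (rule inj_on_inverseI[of _ f]) (use inv G in auto)
  have fG: "f ` G \<subseteq> pauli_idx n" using G y map2_idx unfolding f_def by blast
  have disj: "G \<inter> f ` G = {}" using no unfolding f_def by auto
  have "card G + card (f ` G) = card (G \<union> f ` G)"
    using card_Un_disjoint[OF finG finite_imageI[OF finG] disj] by simp
  also have "\<dots> \<le> card (pauli_idx n)" using G fG fin by (intro card_mono) auto
  finally have "2 * card G \<le> card (pauli_idx n)" using card_image[OF inj] by simp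
  hence "2 * real (card G) \<le> real (card (pauli_idx n))" by linarith
  moreover have "card (pauli_idx n) > 0" using fin pauli_idx_ne[of n] card_gt_0_iff by blast
  ultimately show False using c by linarith
qed



theorem lemma5:
  fixes n :: nat and U :: "complex mat" and \<delta> :: real
  assumes "n \<ge> 1"
    and "unitary (2 ^ n) U"
    and "\<delta> \<ge> 0"
    and "real (card {x \<in> pauli_idx n. set_dist (U * pauli_str x * adj U) (pauli_group n) \<le> \<delta>})
           \<ge> 2 / 3 * real (card (pauli_idx n))"
  shows "\<forall>y \<in> pauli_idx n. set_dist (U * pauli_str y * adj U) (pauli_group n) \<le> 2 * \<delta>"
proof
  fix y assume y: "y \<in> pauli_idx n"
  define N :: nat where "N = 2 ^ n"
  have U: "U \<in> carrier_mat N N" and Uu1: "adj U * U = 1\<^sub>m N" and Uu2: "U * adj U = 1\<^sub>m N"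
    using assms(2) unfolding unitary_def N_def by auto
  have aU: "adj U \<in> carrier_mat N N" using U by simp
  define A where "A x = U * pauli_str x * adj U" for x
  define G where "G = {x \<in> pauli_idx n. set_dist (A x) (pauli_group n) \<le> \<delta>}"
  have S: "\<And>x. x \<in> pauli_idx n \<Longrightarrow> pauli_str x \<in> carrier_mat N N"
    using pstr_carrier unfolding pauli_idx_def N_def by fastforce
  have Su: "\<And>x. x \<in> pauli_idx n \<Longrightarrow> pauli_str x * adj (pauli_str x) = 1\<^sub>m N"
    using pstr_unitary unfolding pauli_idx_def N_def by fastforce
  have Ac: "\<And>x. x \<in> pauli_idx n \<Longrightarrow> A x \<in> carrier_mat N N"
    unfolding A_def using U aU S by (metis sq_mult)
  have Au: "\<And>x. x \<in> pauli_idx n \<Longrightarrow> A x * adj (A x) = 1\<^sub>m N"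
    unfolding A_def using conj_unitary[OF U Uu1 Uu2 S Su] by blast
  have dimA: "\<And>x. x \<in> pauli_idx n \<Longrightarrow> dim_row (A x) = N" using Ac by auto
  have PGne: "pauli_group n \<noteq> {}"
  proof -
    have "(\<i> ^ 0) \<cdot>\<^sub>m pauli_str (replicate n 0) \<in> pauli_group n"
      unfolding pauli_group_def using pauli_idx_ne[of n]
      by (intro CollectI exI[of _ 0] exI[of _ "replicate n 0"]) simp
    thus ?thesis by blast
  qed
  obtain x where xG: "x \<in> G" and zG: "map2 pmul x y \<in> G"
    using counting[of G n y] y assms(4) unfolding G_def A_def by auto
  define z where "z = map2 pmul x y"
  have x: "x \<in> pauli_idx n" and z: "z \<in> pauli_idx n" using xG zG unfolding G_def z_def by auto
  have dx: "set_dist (A x) (pauli_group n) \<le> \<delta>" and dz: "set_dist (A z) (pauli_group n) \<le> \<delta>"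
    using xG zG unfolding G_def z_def by auto
  obtain k where k: "pauli_str x * pauli_str z = (\<i> ^ k) \<cdot>\<^sub>m pauli_str y"
    using pstr_mult[of x y] x y unfolding z_def pauli_idx_def by auto
  define c where "c = \<i> ^ (3 * k)"
  have c: "cmod c = 1" unfolding c_def by (simp add: norm_power)
  have T: "A y = c \<cdot>\<^sub>m (A x * A z)"
  proof -
    have Sx: "pauli_str x \<in> carrier_mat N N" and Sz: "pauli_str z \<in> carrier_mat N N"
      and Sy: "pauli_str y \<in> carrier_mat N N" using S x y z by auto
    have c1: "\<And>Z. Z \<in> carrier_mat N N \<Longrightarrow> adj U * (U * Z) = Z"
    proof -
      fix Z :: "complex mat" assume Z: "Z \<in> carrier_mat N N"
      have "adj U * (U * Z) = (adj U * U) * Z" by (rule assoc_mult_mat[OF aU U Z, symmetric])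
      thus "adj U * (U * Z) = Z" using Uu1 Z by simp
    qed
    have h1: "pauli_str x * (pauli_str z * adj U) = (\<i> ^ k) \<cdot>\<^sub>m (pauli_str y * adj U)"
    proof -
      have "pauli_str x * (pauli_str z * adj U) = (pauli_str x * pauli_str z) * adj U"
        by (rule assoc_mult_mat[OF Sx Sz aU, symmetric])
      also have "\<dots> = (\<i> ^ k) \<cdot>\<^sub>m (pauli_str y * adj U)"
        unfolding k by (rule mult_smult_assoc_mat[OF Sy aU])
      finally show ?thesis .
    qed
    have "A x * A z = U * (pauli_str x * (pauli_str z * adj U))"
      unfolding A_def using U aU Sx Sz by (simp add: assoc_mult_mat[of _ N N _ N _ N] sq_mult c1)
    also have "\<dots> = (\<i> ^ k) \<cdot>\<^sub>m (U * (pauli_str y * adj U))"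
      unfolding h1 by (rule mult_smult_distrib[OF U sq_mult[OF Sy aU]])
    also have "U * (pauli_str y * adj U) = A y"
      unfolding A_def by (rule assoc_mult_mat[OF U Sy aU, symmetric])
    finally have "c \<cdot>\<^sub>m (A x * A z) = (c * \<i> ^ k) \<cdot>\<^sub>m A y" by (simp add: smult_assoc_m)
    also have "c * \<i> ^ k = \<i> ^ (4 * k)" unfolding c_def by (simp add: power_add[symmetric])
    also have "\<dots> = 1" by (simp add: power_mult)
    finally show ?thesis by (simp add: smult_1_m)
  qed
  have sq: "sqrt (2 * real N) > 0" unfolding N_def by simp
  show "set_dist (U * pauli_str y * adj U) (pauli_group n) \<le> 2 * \<delta>"
    unfolding A_def[symmetric]
  proof (rule field_le_epsilon)
    fix e :: real assume e: "e > 0"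
    have "set_dist (A x) (pauli_group n) < \<delta> + e / 2" using dx e by linarith
    then obtain P1 t1 where P1: "P1 \<in> pauli_group n" and t1: "t1 \<in> {0..<2*pi}"
      and b1: "fnorm (exp (\<i> * complex_of_real t1) \<cdot>\<^sub>m A x - P1) / sqrt (2 * real N) < \<delta> + e / 2"
      using close[OF _ PGne] dimA[OF x] by metis
    have "set_dist (A z) (pauli_group n) < \<delta> + e / 2" using dz e by linarith
    then obtain P2 t2 where P2: "P2 \<in> pauli_group n" and t2: "t2 \<in> {0..<2*pi}"
      and b2: "fnorm (exp (\<i> * complex_of_real t2) \<cdot>\<^sub>m A z - P2) / sqrt (2 * real N) < \<delta> + e / 2"
      using close[OF _ PGne] dimA[OF z] by metis
    define \<theta> where "\<theta> = (if t1 + t2 < 2 * pi then t1 + t2 else t1 + t2 - 2 * pi)"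
    have th: "\<theta> \<in> {0..<2*pi}" using t1 t2 unfolding \<theta>_def by auto
    have eth: "exp (\<i> * complex_of_real \<theta>) = exp (\<i> * complex_of_real (t1 + t2))"
    proof (cases "t1 + t2 < 2 * pi")
      case True thus ?thesis unfolding \<theta>_def by simp
    next
      case False
      have "exp (\<i> * complex_of_real (t1 + t2 - 2 * pi)) = exp (\<i> * complex_of_real (t1 + t2)) / exp (\<i> * (of_real pi * 2))"
        by (simp add: right_diff_distrib exp_diff mult.commute)
      thus ?thesis using False unfolding \<theta>_def by simp
    qed
    define P where "P = c \<cdot>\<^sub>m (P1 * P2)"
    have PG: "P \<in> pauli_group n" unfolding P_def c_def by (rule pg_mult[OF P1 P2])
    have P1c: "P1 \<in> carrier_mat N N" and P2c: "P2 \<in> carrier_mat N N"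
      using pg_carrier P1 P2 unfolding N_def by auto
    have P1u: "adj P1 * P1 = 1\<^sub>m N" using pg_unitary[OF P1] unfolding N_def .
    have dimT: "dim_row (A y) = N" using dimA[OF y] .
    have "set_dist (A y) (pauli_group n) \<le> fnorm (exp (\<i> * complex_of_real \<theta>) \<cdot>\<^sub>m A y - P) / sqrt (2 * real (dim_row (A y)))"
      by (rule upper[OF PG th])
    also have "\<dots> = fnorm (exp (\<i> * complex_of_real (t1 + t2)) \<cdot>\<^sub>m (c \<cdot>\<^sub>m (A x * A z)) - c \<cdot>\<^sub>m (P1 * P2)) / sqrt (2 * real N)"
      unfolding eth dimT P_def using T by simp
    also have "\<dots> \<le> (fnorm (exp (\<i> * complex_of_real t1) \<cdot>\<^sub>m A x - P1) + fnorm (exp (\<i> * complex_of_real t2) \<cdot>\<^sub>m A z - P2)) / sqrt (2 * real N)"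
      by (rule divide_right_mono[OF combine[OF Ac[OF x] Ac[OF z] Au[OF z] P1c P2c P1u c]]) (use sq in simp)
    also have "\<dots> = fnorm (exp (\<i> * complex_of_real t1) \<cdot>\<^sub>m A x - P1) / sqrt (2 * real N) + fnorm (exp (\<i> * complex_of_real t2) \<cdot>\<^sub>m A z - P2) / sqrt (2 * real N)"
      by (simp add: add_divide_distrib)
    also have "\<dots> < 2 * \<delta> + e" using b1 b2 by linarith
    finally show "set_dist (A y) (pauli_group n) \<le> 2 * \<delta> + e" by simp
  qed
qed

end
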